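(* Let $W:\mathbb{T}\to(-\infty,\infty]$ satisfy: $W\in L^1(\mathbb{T})\cap C^2(\mathbb{T}\setminus\{0\})$ with $\int_{\mathbb{T}}W=0$; $W$ is even; and there is $C_1>0$ with $W''(x)\ge C_1$ for $x\in\mathbb{T}\setminus\{0\}$. Then $\hat W(k)>0$ for every $k\in\mathbb{Z}\setminus\{0\}$.
   Context: $\mathbb{T}=\mathbb{R}/\mathbb{Z}$; Fourier coefficients are $\hat W(k)=\int_{\mathbb{T}}W(x)e^{-2\pi ikx}\,dx$. *)

theory Defs
  imports "HOL-Analysis.Analysis"
begin

text \<open>Functions on the torus T = R/Z are modelled as 1-periodic functions real => real.
  The Fourier coefficient is the integral over one period [0,1].\<close>

definition fourier_coeff :: "(real \<Rightarrow> real) \<Rightarrow> int \<Rightarrow> complex" where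
  "fourier_coeff W k =
     integral {0..1} (\<lambda>x. complex_of_real (W x) * exp (- (2 * of_real pi * \<i> * of_int k * of_real x)))"

end

theory Submission
  imports Defs
begin


lemma hi_aff:
  fixes f :: "real \<Rightarrow> real"
  assumes "(f has_integral i) {a..b}" "m > 0"
  shows "((\<lambda>x. f (m*x + c)) has_integral i/m) {(a-c)/m..(b-c)/m}"
  using has_integral_affinity'[of f i a b m c] assms by (simp add: divide_simps)

lemma hi_refl:
  fixes f :: "real \<Rightarrow> real"
  assumes "(f has_integral i) {a..b}"
  shows "((\<lambda>x. f (c - x)) has_integral i) {c-b..c-a}"
proof -
  have "((\<lambda>x. f (x + c)) has_integral i) {a-c..b-c}"
    using hi_aff[OF assms, of 1 c] by simp
  then have "((\<lambda>x. f (-x + c)) has_integral i) {-(b-c)..-(a-c)}"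
    using has_integral_reflect_real[of "\<lambda>x. f (x + c)"] by blast
  then show ?thesis by simp
qed

lemma pair_nonneg:
  fixes g :: "real \<Rightarrow> real"
  assumes cvx: "\<And>x y u. 0<x \<Longrightarrow> x<1 \<Longrightarrow> 0<y \<Longrightarrow> y<1 \<Longrightarrow> 0\<le>u \<Longrightarrow> u\<le>1 \<Longrightarrow> g (u*x+(1-u)*y) \<le> u*g x + (1-u)*g y"
    and hint: "(\<lambda>s. g s * cos (2*pi* s)) integrable_on {0..1}"
  shows "integral {0..1} (\<lambda>s. g s * cos (2*pi* s)) \<ge> 0"
proof -
  define h where "h = (\<lambda>s. g s * cos (2*pi* s))"
  have ih: "h integrable_on {0..1}" using hint h_def by simp
  have sub: "h integrable_on {a..b}" if "0 \<le> a" "b \<le> 1" for a b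
    using integrable_subinterval_real[OF ih] that by auto
  have c1: "integral {0..1} h = integral {0..1/2} h + integral {1/2..1} h"
    using Henstock_Kurzweil_Integration.integral_combine[of 0 "1/2" 1 h] ih by simp
  have c2: "integral {0..1/2} h = integral {0..1/4} h + integral {1/4..1/2} h"
    using Henstock_Kurzweil_Integration.integral_combine[of 0 "1/4" "1/2" h] sub[of 0 "1/2"] by simp
  have c3: "integral {1/2..1} h = integral {1/2..3/4} h + integral {3/4..1} h"
    using Henstock_Kurzweil_Integration.integral_combine[of "1/2" "3/4" 1 h] sub[of "1/2" 1] by simp
  have h1: "(h has_integral integral {0..1/4} h) {0..1/4}"
    using sub[of 0 "1/4"] by (simp add: integrable_integral)
  have h2: "((\<lambda>t. h (1/2 - t)) has_integral integral {1/4..1/2} h) {0..1/4}"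
    using hi_refl[of h "integral {1/4..1/2} h" "1/4" "1/2" "1/2"] sub[of "1/4" "1/2"]
    by (simp add: integrable_integral)
  have h3: "((\<lambda>t. h (1*t + 1/2)) has_integral integral {1/2..3/4} h / 1) {(1/2-1/2)/1..(3/4-1/2)/1}"
    using hi_aff[of h "integral {1/2..3/4} h" "1/2" "3/4" 1 "1/2"] sub[of "1/2" "3/4"]
    by (simp add: integrable_integral)
  have h4: "((\<lambda>t. h (1 - t)) has_integral integral {3/4..1} h) {0..1/4}"
    using hi_refl[of h "integral {3/4..1} h" "3/4" "1" "1"] sub[of "3/4" "1"]
    by (simp add: integrable_integral)
  define F where "F = (\<lambda>t. h t + h (1/2 - t) + h (1*t + 1/2) + h (1 - t))"
  have hF: "(F has_integral integral {0..1} h) {0..1/4}"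
    unfolding F_def c1 c2 c3
    using has_integral_add[OF has_integral_add[OF has_integral_add[OF h1 h2] h3[simplified]] h4]
    by (simp add: add.assoc)
  have pos: "F t \<ge> 0" if t: "t \<in> {0..1/4} - {0}" for t
  proof -
    have t0: "0 < t" "t \<le> 1/4" using t by auto
    define c where "c = cos (2*pi*t)"
    have c0: "c \<ge> 0" unfolding c_def using t0 pi_gt_zero by (intro cos_ge_zero) (auto intro: order_trans[of _ 0] mult_nonneg_nonneg)
    have e2: "cos (2*pi*(1/2 - t)) = - c" unfolding c_def
      by (simp add: right_diff_distrib cos_diff)
    have e3: "cos (2*pi*(1*t + 1/2)) = - c" unfolding c_def
      by (simp add: distrib_left cos_add)
    have e4: "cos (2*pi*(1 - t)) = c" unfolding c_def
      by (simp add: right_diff_distrib cos_diff)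
    define l where "l = 1 / (2*(1-2*t))"
    have l0: "0 \<le> l" "l \<le> 1" unfolding l_def using t0 by (auto simp: field_simps)
    have lm: "l*(1-2*t) = 1/2" unfolding l_def using t0 by (simp add: field_simps)
    have p2: "1/2 - t = l*t + (1-l)*(1-t)" using lm by (simp add: algebra_simps)
    have p3: "1/2 + t = (1-l)*t + (1-(1-l))*(1-t)" using lm by (simp add: algebra_simps)
    have i2: "g (1/2 - t) \<le> l * g t + (1-l) * g (1-t)"
      unfolding p2 using t0 l0 by (intro cvx) auto
    have i3: "g (1/2 + t) \<le> (1-l) * g t + (1-(1-l)) * g (1-t)"
      unfolding p3 using t0 l0 by (intro cvx) auto
    have "F t = c * (g t + g (1-t) - g (1/2 - t) - g (1/2 + t))"
      unfolding F_def h_def using e2 e3 e4 c_def by (simp add: algebra_simps)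
    moreover have "g t + g (1-t) - g (1/2 - t) - g (1/2 + t) \<ge> 0" using i2 i3 by (simp add: algebra_simps)
    ultimately show ?thesis using c0 by simp
  qed
  have hG: "((\<lambda>t. if t = 0 then 0 else F t) has_integral integral {0..1} h) {0..1/4}"
    by (rule has_integral_spike[OF negligible_sing[of 0] _ hF]) auto
  have "0 \<le> integral {0..1} h"
    by (rule has_integral_nonneg[OF hG]) (use pos in auto)
  then show ?thesis unfolding h_def .
qed

lemma periods_nonneg:
  fixes V :: "real \<Rightarrow> real" and n :: nat
  assumes n: "n \<ge> 1" and cvx: "convex_on {0<..<1} V"
    and hint: "(\<lambda>x. V x * cos (2*pi*real n*x)) integrable_on {0..1}"
  shows "integral {0..1} (\<lambda>x. V x * cos (2*pi*real n*x)) \<ge> 0"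
proof -
  define P where "P = (\<lambda>x. V x * cos (2*pi*real n*x))"
  have ip: "P integrable_on {0..1}" using hint P_def by simp
  have sub: "P integrable_on {a..b}" if "0 \<le> a" "b \<le> 1" for a b
    using integrable_subinterval_real[OF ip] that by auto
  have npos: "real n > 0" using n by simp
  have spl: "m \<le> n \<longrightarrow> integral {0..real m/n} P = (\<Sum>j<m. integral {real j/n..real (Suc j)/n} P)" for m
  proof (induction m)
    case 0 then show ?case by simp
  next
    case (Suc m)
    show ?case
    proof
      assume mn: "Suc m \<le> n"
      have le1: "real (Suc m) / n \<le> 1" using mn npos by (simp add: divide_simps)
      have "integral {0..real m/n} P + integral {real m/n..real (Suc m)/n} P = integral {0..real (Suc m)/n} P"
        using Henstock_Kurzweil_Integration.integral_combine[of 0 "real m/n" "real (Suc m)/n" P] sub[of 0 "real (Suc m)/n"] le1 npos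
        by (simp add: divide_simps)
      then show "integral {0..real (Suc m)/n} P = (\<Sum>j<Suc m. integral {real j/n..real (Suc j)/n} P)"
        using Suc.IH mn by simp
    qed
  qed
  have tnn: "integral {real j/n..real (Suc j)/n} P \<ge> 0" if j: "j < n" for j
  proof -
    define I where "I = integral {real j/n..real (Suc j)/n} P"
    have le1: "real (Suc j) / n \<le> 1" using j npos by (simp add: divide_simps)
    have hp: "(P has_integral I) {real j/n..real (Suc j)/n}"
      unfolding I_def using sub[of "real j/n" "real (Suc j)/n"] le1 by (simp add: integrable_integral)
    have "((\<lambda>s. P ((1/n)* s + real j/n)) has_integral I/(1/n)) {(real j/n - real j/n)/(1/n)..(real (Suc j)/n - real j/n)/(1/n)}"
      using hi_aff[OF hp, of "1/n" "real j/n"] npos by simp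
    moreover have "(real (Suc j)/n - real j/n)/(1/n) = 1" using npos by (simp add: divide_simps)
    ultimately have h1: "((\<lambda>s. P ((1/n)* s + real j/n)) has_integral I * n) {0..1}" by simp
    define g where "g = (\<lambda>s. V ((1/n)* s + real j/n))"
    have eqP: "P ((1/n)* s + real j/n) = g s * cos (2*pi* s)" for s
    proof -
      have "2*pi*real n*((1/n)* s + real j/n) = 2*pi* s + (2*pi) * of_int (int j)"
        using npos by (simp add: field_simps)
      then have "cos (2*pi*real n*((1/n)* s + real j/n)) = cos (2*pi* s)"
        by (simp only: cos_add cos_int_2pin sin_int_2pin)
      then show ?thesis unfolding P_def g_def by simp
    qed
    have h2: "((\<lambda>s. g s * cos (2*pi* s)) has_integral I * n) {0..1}" using h1 eqP by simp
    have gc: "g (u*x+(1-u)*y) \<le> u*g x + (1-u)*g y"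
      if "0<x" "x<1" "0<y" "y<1" "0\<le>u" "u\<le>1" for x y u
    proof -
      have mem: "(1/n)*z + real j/n \<in> {0<..<1}" if "0<z" "z<1" for z
      proof -
        have "(1/n)*z + real j/n = (z + j)/n" by (simp add: add_divide_distrib)
        moreover have "z + j < n" using that j by linarith
        ultimately show ?thesis using that npos by (simp add: divide_simps)
      qed
      have e: "(1/n)*(u*x+(1-u)*y) + real j/n = (1 - (1-u)) *\<^sub>R ((1/n)*x + real j/n) + (1-u) *\<^sub>R ((1/n)*y + real j/n)"
        using npos by (simp add: field_simps)
      show ?thesis unfolding g_def e
        using convex_onD[OF cvx, of "1-u" "(1/n)*x + real j/n" "(1/n)*y + real j/n"] mem that by simp
    qed
    have "integral {0..1} (\<lambda>s. g s * cos (2*pi* s)) \<ge> 0"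
      by (rule pair_nonneg[OF gc]) (use h2 in auto)
    then have "I * n \<ge> 0" using h2 integral_unique by metis
    then show ?thesis unfolding I_def using npos by (simp add: zero_le_mult_iff)
  qed
  have "integral {0..1} P = (\<Sum>j<n. integral {real j/n..real (Suc j)/n} P)"
    using spl[of n] npos by simp
  also have "\<dots> \<ge> 0" using tnn by (intro sum_nonneg) auto
  finally show ?thesis unfolding P_def by simp
qed

lemma quad_int:
  fixes n :: nat assumes n: "n \<ge> 1"
  shows "((\<lambda>x. x^2 * cos (2*pi*real n*x)) has_integral 2/(2*pi*real n)^2) {0..1}"
proof -
  define a where "a = 2*pi*real n"
  have a0: "a \<noteq> 0" using n unfolding a_def by simp
  define F where "F = (\<lambda>x. x^2 * sin (a*x) / a + 2*x*cos (a*x)/a^2 - 2* sin (a*x)/a^3)"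
  have d: "(F has_real_derivative x^2 * cos (a*x)) (at x within {0..1})" for x
    unfolding F_def using a0
    by (auto intro!: derivative_eq_intros simp: field_simps power2_eq_square power3_eq_cube)
  have "((\<lambda>x. x^2 * cos (a*x)) has_integral (F 1 - F 0)) {0..1}"
    by (rule fundamental_theorem_of_calculus) (use d in \<open>auto simp: has_real_derivative_iff_has_vector_derivative[symmetric]\<close>)
  moreover have "sin a = 0" "cos a = 1" unfolding a_def
    using sin_int_2pin[of "int n"] cos_int_2pin[of "int n"] by simp_all
  then have "F 1 - F 0 = 2/a^2" unfolding F_def by simp
  ultimately show ?thesis unfolding a_def by simp
qed

lemma prod_int:
  fixes W \<phi> :: "real \<Rightarrow> real"
  assumes "W absolutely_integrable_on {0..1}" "continuous_on UNIV \<phi>" "\<And>x. \<bar>\<phi> x\<bar> \<le> 1"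
  shows "(\<lambda>x. W x * \<phi> x) integrable_on {0..1}"
proof -
  have m: "\<phi> \<in> borel_measurable (lebesgue_on {0..1})"
    by (rule continuous_imp_measurable_on_sets_lebesgue) (use assms(2) continuous_on_subset in auto)
  have b: "bounded (\<phi> ` {0..1})" unfolding bounded_iff using assms(3) by auto
  have "(\<lambda>x. \<phi> x * W x) absolutely_integrable_on {0..1}"
    by (rule absolutely_integrable_bounded_measurable_product_real[OF m _ b assms(1)]) auto
  then show ?thesis by (simp add: absolutely_integrable_on_def mult.commute)
qed


lemma nonint01: "0 < x \<Longrightarrow> x < 1 \<Longrightarrow> (x::real) \<notin> \<int>"
  by (auto elim!: Ints_cases)

theorem lemma3p7:
  fixes W W' W'' :: "real \<Rightarrow> real" and C1 :: real
  assumes periodic: "\<And>x. W (x + 1) = W x"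
    and L1: "W absolutely_integrable_on {0..1}"
    and mean_zero: "integral {0..1} W = 0"
    and deriv1: "\<And>x. x \<notin> \<int> \<Longrightarrow> (W has_real_derivative W' x) (at x)"
    and deriv2: "\<And>x. x \<notin> \<int> \<Longrightarrow> (W' has_real_derivative W'' x) (at x)"
    and cont2: "continuous_on (- \<int>) W''"
    and even: "\<And>x. W (- x) = W x"
    and C1_pos: "C1 > 0"
    and convex: "\<And>x. x \<notin> \<int> \<Longrightarrow> W'' x \<ge> C1"
  shows "\<forall>k::int. k \<noteq> 0 \<longrightarrow> fourier_coeff W k \<in> \<real> \<and> Re (fourier_coeff W k) > 0"
proof (intro allI impI)
  fix k :: int assume k0: "k \<noteq> 0"
  define n where "n = nat \<bar>k\<bar>"
  have n1: "n \<ge> 1" using k0 unfolding n_def by simp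
  have rn: "real n = \<bar>real_of_int k\<bar>" unfolding n_def by simp
  have ccos: "cos (2*pi*real_of_int k*x) = cos (2*pi*real n*x)" for x
  proof (cases "k \<ge> 0")
    case True then show ?thesis using rn by simp
  next
    case False
    then have "2*pi*real n*x = - (2*pi*real_of_int k*x)" using rn by simp
    then show ?thesis by (metis cos_minus)
  qed
  define Ic where "Ic = integral {0..1} (\<lambda>x. W x * cos (2*pi*real_of_int k*x))"
  define Is where "Is = integral {0..1} (\<lambda>x. W x * sin (2*pi*real_of_int k*x))"
  have intc: "(\<lambda>x. W x * cos (2*pi*real_of_int k*x)) integrable_on {0..1}"
    by (rule prod_int[OF L1]) (auto intro!: continuous_intros)
  have ints: "(\<lambda>x. W x * sin (2*pi*real_of_int k*x)) integrable_on {0..1}"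
    by (rule prod_int[OF L1]) (auto intro!: continuous_intros)
  have hc: "((\<lambda>x. W x * cos (2*pi*real_of_int k*x)) has_integral Ic) {0..1}"
    using intc Ic_def by (simp add: integrable_integral)
  have hs: "((\<lambda>x. W x * sin (2*pi*real_of_int k*x)) has_integral Is) {0..1}"
    using ints Is_def by (simp add: integrable_integral)
  have eq: "complex_of_real (W x) * exp (- (2 * of_real pi * \<i> * of_int k * of_real x))
     = of_real (W x * cos (2*pi*real_of_int k*x)) - \<i> * of_real (W x * sin (2*pi*real_of_int k*x))" for x
  proof -
    have "exp (- (2 * of_real pi * \<i> * of_int k * of_real x)) = cis (- (2*pi*real_of_int k*x))"
      by (simp add: cis_conv_exp algebra_simps)
    then show ?thesis by (simp add: complex_eq_iff cis.sel)
  qed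
  have hf: "((\<lambda>x. complex_of_real (W x) * exp (- (2 * of_real pi * \<i> * of_int k * of_real x)))
      has_integral (of_real Ic - \<i> * of_real Is)) {0..1}"
    unfolding eq by (intro has_integral_diff has_integral_mult_right has_integral_of_real hc hs)
  have fc: "fourier_coeff W k = of_real Ic - \<i> * of_real Is"
    unfolding fourier_coeff_def using hf by (rule integral_unique)
  have Is0: "Is = 0"
  proof -
    have "((\<lambda>x. W (1 - x) * sin (2*pi*real_of_int k*(1 - x))) has_integral Is) {1-1..1-0}"
      using hi_refl[OF hs, of 1] by simp
    moreover have "W (1 - x) * sin (2*pi*real_of_int k*(1 - x)) = - (W x * sin (2*pi*real_of_int k*x))" for x
    proof -
      have "W (1 - x) = W x" using periodic[of "-x"] even[of x] by simp
      moreover have "sin (2*pi*real_of_int k*(1 - x)) = - sin (2*pi*real_of_int k*x)"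
        by (simp add: right_diff_distrib sin_diff)
      ultimately show ?thesis by simp
    qed
    ultimately have "((\<lambda>x. - (W x * sin (2*pi*real_of_int k*x))) has_integral Is) {0..1}" by simp
    moreover have "((\<lambda>x. - (W x * sin (2*pi*real_of_int k*x))) has_integral - Is) {0..1}"
      using has_integral_neg[OF hs] .
    ultimately have "Is = - Is" using has_integral_unique by blast
    then show ?thesis by simp
  qed
  define V where "V = (\<lambda>x. W x - C1/2 * x^2)"
  have cvx: "convex_on {0<..<1} V"
  proof (rule f''_ge0_imp_convex[where f' = "\<lambda>x. W' x - C1 * x" and f'' = "\<lambda>x. W'' x - C1"])
    show "convex {0<..<(1::real)}" by simp
    fix x :: real assume x: "x \<in> {0<..<1}"
    then have xi: "x \<notin> \<int>" using nonint01 by auto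
    show "(V has_real_derivative W' x - C1 * x) (at x)"
      unfolding V_def using deriv1[OF xi]
      by (auto intro!: derivative_eq_intros simp: power2_eq_square)
    show "((\<lambda>x. W' x - C1 * x) has_real_derivative W'' x - C1) (at x)"
      using deriv2[OF xi] by (auto intro!: derivative_eq_intros)
    show "0 \<le> W'' x - C1" using convex[OF xi] by simp
  qed
  have hq: "((\<lambda>x. x^2 * cos (2*pi*real n*x)) has_integral 2/(2*pi*real n)^2) {0..1}"
    using quad_int[OF n1] .
  have hc': "((\<lambda>x. W x * cos (2*pi*real n*x)) has_integral Ic) {0..1}"
    using hc ccos by simp
  have hV: "((\<lambda>x. V x * cos (2*pi*real n*x)) has_integral Ic - C1/2 * (2/(2*pi*real n)^2)) {0..1}"
  proof -
    have "((\<lambda>x. W x * cos (2*pi*real n*x) - C1/2 * (x^2 * cos (2*pi*real n*x))) has_integral Ic - C1/2 * (2/(2*pi*real n)^2)) {0..1}"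
      by (intro has_integral_diff has_integral_mult_right hc' hq)
    then show ?thesis unfolding V_def by (simp add: algebra_simps)
  qed
  have "integral {0..1} (\<lambda>x. V x * cos (2*pi*real n*x)) \<ge> 0"
    by (rule periods_nonneg[OF n1 cvx]) (use hV in auto)
  then have "Ic - C1/2 * (2/(2*pi*real n)^2) \<ge> 0" using hV integral_unique by metis
  moreover have "C1/2 * (2/(2*pi*real n)^2) > 0" using C1_pos n1 by simp
  ultimately have "Ic > 0" by linarith
  then show "fourier_coeff W k \<in> \<real> \<and> Re (fourier_coeff W k) > 0"
    unfolding fc Is0 by simp
qed

end
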